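(* Let $k\approx 7.25054$ be the positive real root of $2x^6-13x^5-11x^4+6x^2+x-1=0$. In the triangle $ABC$ with $a=1$ and $b=c=k$, the triangle centers $X_{12}$ and $X_{15}$ coincide.
   Context: $X_n$ denotes the $n$-th triangle center listed in Kimberling's Encyclopedia of Triangle Centers (ETC), given by barycentric coordinates in terms of $a=BC$, $b=CA$, $c=AB$. *)

theory Defs
  imports Complex_Main
begin

type_synonym bary = "real \<times> real \<times> real"

text \<open>Twice the area of the triangle with side lengths a, b, c (Conway's S).\<close>
definition conwayS :: "real \<Rightarrow> real \<Rightarrow> real \<Rightarrow> real" where
  "conwayS a b c = sqrt ((a+b+c)*(-a+b+c)*(a-b+c)*(a+b-c)) / 2"

definition X12 :: "real \<Rightarrow> real \<Rightarrow> real \<Rightarrow> bary" where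
  "X12 a b c = ((b+c)^2/(b+c-a), (c+a)^2/(c+a-b), (a+b)^2/(a+b-c))"

text \<open>ETC X(15) (first isodynamic point): barycentrics a^2(sqrt 3 S_A + S) : ... \<close>
definition X15 :: "real \<Rightarrow> real \<Rightarrow> real \<Rightarrow> bary" where
  "X15 a b c =
    (a^2 * (sqrt 3 * ((b^2+c^2-a^2)/2) + conwayS a b c),
     b^2 * (sqrt 3 * ((c^2+a^2-b^2)/2) + conwayS a b c),
     c^2 * (sqrt 3 * ((a^2+b^2-c^2)/2) + conwayS a b c))"

definition bsum :: "bary \<Rightarrow> real" where
  "bsum p = fst p + fst (snd p) + snd (snd p)"

definition bnormalize :: "bary \<Rightarrow> bary" where
  "bnormalize p = (fst p / bsum p, fst (snd p) / bsum p, snd (snd p) / bsum p)"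

definition same_point :: "bary \<Rightarrow> bary \<Rightarrow> bool" where
  "same_point p q \<longleftrightarrow> bsum p \<noteq> 0 \<and> bsum q \<noteq> 0 \<and> bnormalize p = bnormalize q"

end

theory Submission
  imports Defs
begin

lemma iv0:
  fixes k :: real
  assumes "0 \<le> k" "k \<le> (1/4)"
  shows "2*k^6 - 13*k^5 - 11*k^4 + 6*k^2 + k - 1 < 0"
proof -
  define h where "h = k - 0"
  have hk: "k = 0 + h" using h_def by simp
  have h0: "0 \<le> h" "h \<le> (1/4)" using assms h_def by auto
  have e: "-(2*k^6 - 13*k^5 - 11*k^4 + 6*k^2 + k - 1) = 1 + (-1)*h + (-6)*h^2 + (0)*h^3 + (11)*h^4 + (13)*h^5 + (-2)*h^6"
    unfolding hk by algebra
  have hb2: "h^2 \<le> (1/16)" using power_mono[OF h0(2) h0(1), of 2] by (simp add: power_divide)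
  have hz2: "0 \<le> h^2" using h0 by simp
  have hb3: "h^3 \<le> (1/64)" using power_mono[OF h0(2) h0(1), of 3] by (simp add: power_divide)
  have hz3: "0 \<le> h^3" using h0 by simp
  have hb4: "h^4 \<le> (1/256)" using power_mono[OF h0(2) h0(1), of 4] by (simp add: power_divide)
  have hz4: "0 \<le> h^4" using h0 by simp
  have hb5: "h^5 \<le> (1/1024)" using power_mono[OF h0(2) h0(1), of 5] by (simp add: power_divide)
  have hz5: "0 \<le> h^5" using h0 by simp
  have hb6: "h^6 \<le> (1/4096)" using power_mono[OF h0(2) h0(1), of 6] by (simp add: power_divide)
  have hz6: "0 \<le> h^6" using h0 by simp
  show ?thesis using e h0 hb2 hb3 hb4 hb5 hb6 hz2 hz3 hz4 hz5 hz6 by linarith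
qed

lemma iv1:
  fixes k :: real
  assumes "(1/4) \<le> k" "k \<le> (7/20)"
  shows "2*k^6 - 13*k^5 - 11*k^4 + 6*k^2 + k - 1 < 0"
proof -
  define h where "h = k - (1/4)"
  have hk: "k = (1/4) + h" using h_def by simp
  have h0: "0 \<le> h" "h \<le> (1/10)" using assms h_def by auto
  have e: "-(2*k^6 - 13*k^5 - 11*k^4 + 6*k^2 + k - 1) = (881/2048) + (-(393/128))*h + ((5/128))*h^2 + ((37/2))*h^3 + ((203/8))*h^4 + (10)*h^5 + (-2)*h^6"
    unfolding hk by algebra
  have hb2: "h^2 \<le> (1/100)" using power_mono[OF h0(2) h0(1), of 2] by (simp add: power_divide)
  have hz2: "0 \<le> h^2" using h0 by simp
  have hb3: "h^3 \<le> (1/1000)" using power_mono[OF h0(2) h0(1), of 3] by (simp add: power_divide)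
  have hz3: "0 \<le> h^3" using h0 by simp
  have hb4: "h^4 \<le> (1/10000)" using power_mono[OF h0(2) h0(1), of 4] by (simp add: power_divide)
  have hz4: "0 \<le> h^4" using h0 by simp
  have hb5: "h^5 \<le> (1/100000)" using power_mono[OF h0(2) h0(1), of 5] by (simp add: power_divide)
  have hz5: "0 \<le> h^5" using h0 by simp
  have hb6: "h^6 \<le> (1/1000000)" using power_mono[OF h0(2) h0(1), of 6] by (simp add: power_divide)
  have hz6: "0 \<le> h^6" using h0 by simp
  show ?thesis using e h0 hb2 hb3 hb4 hb5 hb6 hz2 hz3 hz4 hz5 hz6 by linarith
qed

lemma iv2:
  fixes k :: real
  assumes "(7/20) \<le> k" "k \<le> (2/5)"
  shows "2*k^6 - 13*k^5 - 11*k^4 + 6*k^2 + k - 1 < 0"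
proof -
  define h where "h = k - (7/20)"
  have hk: "k = (7/20) + h" using h_def by simp
  have h0: "0 \<le> h" "h \<le> (1/20)" using assms h_def by auto
  have e: "-(2*k^6 - 13*k^5 - 11*k^4 + 6*k^2 + k - 1) = (4629461/32000000) + (-(15007/6250))*h + ((115337/16000))*h^2 + ((2961/100))*h^3 + ((1203/40))*h^4 + ((44/5))*h^5 + (-2)*h^6"
    unfolding hk by algebra
  have hb2: "h^2 \<le> (1/400)" using power_mono[OF h0(2) h0(1), of 2] by (simp add: power_divide)
  have hz2: "0 \<le> h^2" using h0 by simp
  have hb3: "h^3 \<le> (1/8000)" using power_mono[OF h0(2) h0(1), of 3] by (simp add: power_divide)
  have hz3: "0 \<le> h^3" using h0 by simp
  have hb4: "h^4 \<le> (1/160000)" using power_mono[OF h0(2) h0(1), of 4] by (simp add: power_divide)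
  have hz4: "0 \<le> h^4" using h0 by simp
  have hb5: "h^5 \<le> (1/3200000)" using power_mono[OF h0(2) h0(1), of 5] by (simp add: power_divide)
  have hz5: "0 \<le> h^5" using h0 by simp
  have hb6: "h^6 \<le> (1/64000000)" using power_mono[OF h0(2) h0(1), of 6] by (simp add: power_divide)
  have hz6: "0 \<le> h^6" using h0 by simp
  show ?thesis using e h0 hb2 hb3 hb4 hb5 hb6 hz2 hz3 hz4 hz5 hz6 by linarith
qed

lemma iv3:
  fixes k :: real
  assumes "(2/5) \<le> k" "k \<le> (21/50)"
  shows "2*k^6 - 13*k^5 - 11*k^4 + 6*k^2 + k - 1 < 0"
proof -
  define h where "h = k - (2/5)"
  have hk: "k = (2/5) + h" using h_def by simp
  have h0: "0 \<le> h" "h \<le> (1/50)" using assms h_def by auto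
  have e: "-(2*k^6 - 13*k^5 - 11*k^4 + 6*k^2 + k - 1) = (727/15625) + (-(4509/3125))*h + ((1514/125))*h^2 + ((896/25))*h^3 + ((161/5))*h^4 + ((41/5))*h^5 + (-2)*h^6"
    unfolding hk by algebra
  have hb2: "h^2 \<le> (1/2500)" using power_mono[OF h0(2) h0(1), of 2] by (simp add: power_divide)
  have hz2: "0 \<le> h^2" using h0 by simp
  have hb3: "h^3 \<le> (1/125000)" using power_mono[OF h0(2) h0(1), of 3] by (simp add: power_divide)
  have hz3: "0 \<le> h^3" using h0 by simp
  have hb4: "h^4 \<le> (1/6250000)" using power_mono[OF h0(2) h0(1), of 4] by (simp add: power_divide)
  have hz4: "0 \<le> h^4" using h0 by simp
  have hb5: "h^5 \<le> (1/312500000)" using power_mono[OF h0(2) h0(1), of 5] by (simp add: power_divide)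
  have hz5: "0 \<le> h^5" using h0 by simp
  have hb6: "h^6 \<le> (1/15625000000)" using power_mono[OF h0(2) h0(1), of 6] by (simp add: power_divide)
  have hz6: "0 \<le> h^6" using h0 by simp
  show ?thesis using e h0 hb2 hb3 hb4 hb5 hb6 hz2 hz3 hz4 hz5 hz6 by linarith
qed

lemma iv4:
  fixes k :: real
  assumes "(21/50) \<le> k" "k \<le> (11/25)"
  shows "2*k^6 - 13*k^5 - 11*k^4 + 6*k^2 + k - 1 < 0"
proof -
  define h where "h = k - (21/50)"
  have hk: "k = (21/50) + h" using h_def by simp
  have h0: "0 \<le> h" "h \<le> (1/50)" using assms h_def by auto
  have e: "-(2*k^6 - 13*k^5 - 11*k^4 + 6*k^2 + k - 1) = (89090227/3906250000) + (-(142867981/156250000))*h + ((8962707/625000))*h^2 + ((240303/6250))*h^3 + ((4126/125))*h^4 + ((199/25))*h^5 + (-2)*h^6"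
    unfolding hk by algebra
  have hb2: "h^2 \<le> (1/2500)" using power_mono[OF h0(2) h0(1), of 2] by (simp add: power_divide)
  have hz2: "0 \<le> h^2" using h0 by simp
  have hb3: "h^3 \<le> (1/125000)" using power_mono[OF h0(2) h0(1), of 3] by (simp add: power_divide)
  have hz3: "0 \<le> h^3" using h0 by simp
  have hb4: "h^4 \<le> (1/6250000)" using power_mono[OF h0(2) h0(1), of 4] by (simp add: power_divide)
  have hz4: "0 \<le> h^4" using h0 by simp
  have hb5: "h^5 \<le> (1/312500000)" using power_mono[OF h0(2) h0(1), of 5] by (simp add: power_divide)
  have hz5: "0 \<le> h^5" using h0 by simp
  have hb6: "h^6 \<le> (1/15625000000)" using power_mono[OF h0(2) h0(1), of 6] by (simp add: power_divide)
  have hz6: "0 \<le> h^6" using h0 by simp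
  show ?thesis using e h0 hb2 hb3 hb4 hb5 hb6 hz2 hz3 hz4 hz5 hz6 by linarith
qed

lemma iv5:
  fixes k :: real
  assumes "(11/25) \<le> k" "k \<le> (23/50)"
  shows "2*k^6 - 13*k^5 - 11*k^4 + 6*k^2 + k - 1 < 0"
proof -
  define h where "h = k - (11/25)"
  have hk: "k = (11/25) + h" using h_def by simp
  have h0: "0 \<le> h" "h \<le> (1/50)" using assms h_def by auto
  have e: "-(2*k^6 - 13*k^5 - 11*k^4 + 6*k^2 + k - 1) = (2580328/244140625) + (-(2866612/9765625))*h + ((1306804/78125))*h^2 + ((128502/3125))*h^3 + ((4224/125))*h^4 + ((193/25))*h^5 + (-2)*h^6"
    unfolding hk by algebra
  have hb2: "h^2 \<le> (1/2500)" using power_mono[OF h0(2) h0(1), of 2] by (simp add: power_divide)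
  have hz2: "0 \<le> h^2" using h0 by simp
  have hb3: "h^3 \<le> (1/125000)" using power_mono[OF h0(2) h0(1), of 3] by (simp add: power_divide)
  have hz3: "0 \<le> h^3" using h0 by simp
  have hb4: "h^4 \<le> (1/6250000)" using power_mono[OF h0(2) h0(1), of 4] by (simp add: power_divide)
  have hz4: "0 \<le> h^4" using h0 by simp
  have hb5: "h^5 \<le> (1/312500000)" using power_mono[OF h0(2) h0(1), of 5] by (simp add: power_divide)
  have hz5: "0 \<le> h^5" using h0 by simp
  have hb6: "h^6 \<le> (1/15625000000)" using power_mono[OF h0(2) h0(1), of 6] by (simp add: power_divide)
  have hz6: "0 \<le> h^6" using h0 by simp
  show ?thesis using e h0 hb2 hb3 hb4 hb5 hb6 hz2 hz3 hz4 hz5 hz6 by linarith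
qed

lemma iv6:
  fixes k :: real
  assumes "(23/50) \<le> k" "k \<le> (71/100)"
  shows "2*k^6 - 13*k^5 - 11*k^4 + 6*k^2 + k - 1 < 0"
proof -
  define h where "h = k - (23/50)"
  have hk: "k = (23/50) + h" using h_def by simp
  have h0: "0 \<le> h" "h \<le> (1/4)" using assms h_def by auto
  have e: "-(2*k^6 - 13*k^5 - 11*k^4 + 6*k^2 + k - 1) = (11448667/976562500) + ((66558567/156250000))*h + ((12047527/625000))*h^2 + ((274091/6250))*h^3 + ((4319/125))*h^4 + ((187/25))*h^5 + (-2)*h^6"
    unfolding hk by algebra
  have hb2: "h^2 \<le> (1/16)" using power_mono[OF h0(2) h0(1), of 2] by (simp add: power_divide)
  have hz2: "0 \<le> h^2" using h0 by simp
  have hb3: "h^3 \<le> (1/64)" using power_mono[OF h0(2) h0(1), of 3] by (simp add: power_divide)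
  have hz3: "0 \<le> h^3" using h0 by simp
  have hb4: "h^4 \<le> (1/256)" using power_mono[OF h0(2) h0(1), of 4] by (simp add: power_divide)
  have hz4: "0 \<le> h^4" using h0 by simp
  have hb5: "h^5 \<le> (1/1024)" using power_mono[OF h0(2) h0(1), of 5] by (simp add: power_divide)
  have hz5: "0 \<le> h^5" using h0 by simp
  have hb6: "h^6 \<le> (1/4096)" using power_mono[OF h0(2) h0(1), of 6] by (simp add: power_divide)
  have hz6: "0 \<le> h^6" using h0 by simp
  show ?thesis using e h0 hb2 hb3 hb4 hb5 hb6 hz2 hz3 hz4 hz5 hz6 by linarith
qed

lemma iv7:
  fixes k :: real
  assumes "(71/100) \<le> k" "k \<le> (24/25)"
  shows "2*k^6 - 13*k^5 - 11*k^4 + 6*k^2 + k - 1 < 0"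
proof -
  define h where "h = k - (71/100)"
  have hk: "k = (71/100) + h" using h_def by simp
  have h0: "0 \<le> h" "h \<le> (1/4)" using assms h_def by auto
  have e: "-(2*k^6 - 13*k^5 - 11*k^4 + 6*k^2 + k - 1) = (1074991249229/500000000000) + ((12862875893/625000000))*h + ((661755257/10000000))*h^2 + ((1030707/12500))*h^3 + ((42027/1000))*h^4 + ((112/25))*h^5 + (-2)*h^6"
    unfolding hk by algebra
  have hb2: "h^2 \<le> (1/16)" using power_mono[OF h0(2) h0(1), of 2] by (simp add: power_divide)
  have hz2: "0 \<le> h^2" using h0 by simp
  have hb3: "h^3 \<le> (1/64)" using power_mono[OF h0(2) h0(1), of 3] by (simp add: power_divide)
  have hz3: "0 \<le> h^3" using h0 by simp
  have hb4: "h^4 \<le> (1/256)" using power_mono[OF h0(2) h0(1), of 4] by (simp add: power_divide)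
  have hz4: "0 \<le> h^4" using h0 by simp
  have hb5: "h^5 \<le> (1/1024)" using power_mono[OF h0(2) h0(1), of 5] by (simp add: power_divide)
  have hz5: "0 \<le> h^5" using h0 by simp
  have hb6: "h^6 \<le> (1/4096)" using power_mono[OF h0(2) h0(1), of 6] by (simp add: power_divide)
  have hz6: "0 \<le> h^6" using h0 by simp
  show ?thesis using e h0 hb2 hb3 hb4 hb5 hb6 hz2 hz3 hz4 hz5 hz6 by linarith
qed

lemma iv8:
  fixes k :: real
  assumes "(24/25) \<le> k" "k \<le> (49/50)"
  shows "2*k^6 - 13*k^5 - 11*k^4 + 6*k^2 + k - 1 < 0"
proof -
  define h where "h = k - (24/25)"
  have hk: "k = (24/25) + h" using h_def by simp
  have h0: "0 \<le> h" "h \<le> (1/50)" using assms h_def by auto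
  have e: "-(2*k^6 - 13*k^5 - 11*k^4 + 6*k^2 + k - 1) = (3146372473/244140625) + ((701478887/9765625))*h + ((11278194/78125))*h^2 + ((395808/3125))*h^3 + ((5719/125))*h^4 + ((37/25))*h^5 + (-2)*h^6"
    unfolding hk by algebra
  have hb2: "h^2 \<le> (1/2500)" using power_mono[OF h0(2) h0(1), of 2] by (simp add: power_divide)
  have hz2: "0 \<le> h^2" using h0 by simp
  have hb3: "h^3 \<le> (1/125000)" using power_mono[OF h0(2) h0(1), of 3] by (simp add: power_divide)
  have hz3: "0 \<le> h^3" using h0 by simp
  have hb4: "h^4 \<le> (1/6250000)" using power_mono[OF h0(2) h0(1), of 4] by (simp add: power_divide)
  have hz4: "0 \<le> h^4" using h0 by simp
  have hb5: "h^5 \<le> (1/312500000)" using power_mono[OF h0(2) h0(1), of 5] by (simp add: power_divide)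
  have hz5: "0 \<le> h^5" using h0 by simp
  have hb6: "h^6 \<le> (1/15625000000)" using power_mono[OF h0(2) h0(1), of 6] by (simp add: power_divide)
  have hz6: "0 \<le> h^6" using h0 by simp
  show ?thesis using e h0 hb2 hb3 hb4 hb5 hb6 hz2 hz3 hz4 hz5 hz6 by linarith
qed

lemma iv9:
  fixes k :: real
  assumes "(49/50) \<le> k" "k \<le> 1"
  shows "2*k^6 - 13*k^5 - 11*k^4 + 6*k^2 + k - 1 < 0"
proof -
  define h where "h = k - (49/50)"
  have hk: "k = (49/50) + h" using h_def by simp
  have h0: "0 \<le> h" "h \<le> (1/50)" using assms h_def by auto
  have e: "-(2*k^6 - 13*k^5 - 11*k^4 + 6*k^2 + k - 1) = (56183341237/3906250000) + ((12149895131/156250000))*h + ((95043947/625000))*h^2 + ((814527/6250))*h^3 + ((5736/125))*h^4 + ((31/25))*h^5 + (-2)*h^6"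
    unfolding hk by algebra
  have hb2: "h^2 \<le> (1/2500)" using power_mono[OF h0(2) h0(1), of 2] by (simp add: power_divide)
  have hz2: "0 \<le> h^2" using h0 by simp
  have hb3: "h^3 \<le> (1/125000)" using power_mono[OF h0(2) h0(1), of 3] by (simp add: power_divide)
  have hz3: "0 \<le> h^3" using h0 by simp
  have hb4: "h^4 \<le> (1/6250000)" using power_mono[OF h0(2) h0(1), of 4] by (simp add: power_divide)
  have hz4: "0 \<le> h^4" using h0 by simp
  have hb5: "h^5 \<le> (1/312500000)" using power_mono[OF h0(2) h0(1), of 5] by (simp add: power_divide)
  have hz5: "0 \<le> h^5" using h0 by simp
  have hb6: "h^6 \<le> (1/15625000000)" using power_mono[OF h0(2) h0(1), of 6] by (simp add: power_divide)
  have hz6: "0 \<le> h^6" using h0 by simp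
  show ?thesis using e h0 hb2 hb3 hb4 hb5 hb6 hz2 hz3 hz4 hz5 hz6 by linarith
qed
lemma k_gt1:
  fixes k :: real
  assumes "k > 0" and f0: "2*k^6 - 13*k^5 - 11*k^4 + 6*k^2 + k - 1 = 0"
  shows "k > 1"
proof -
  have "\<not> (0 \<le> k \<and> k \<le> 1/4)" using iv0[of k] f0 by auto
  moreover have "\<not> (1/4 \<le> k \<and> k \<le> 7/20)" using iv1[of k] f0 by auto
  moreover have "\<not> (7/20 \<le> k \<and> k \<le> 2/5)" using iv2[of k] f0 by auto
  moreover have "\<not> (2/5 \<le> k \<and> k \<le> 21/50)" using iv3[of k] f0 by auto
  moreover have "\<not> (21/50 \<le> k \<and> k \<le> 11/25)" using iv4[of k] f0 by auto
  moreover have "\<not> (11/25 \<le> k \<and> k \<le> 23/50)" using iv5[of k] f0 by auto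
  moreover have "\<not> (23/50 \<le> k \<and> k \<le> 71/100)" using iv6[of k] f0 by auto
  moreover have "\<not> (71/100 \<le> k \<and> k \<le> 24/25)" using iv7[of k] f0 by auto
  moreover have "\<not> (24/25 \<le> k \<and> k \<le> 49/50)" using iv8[of k] f0 by auto
  moreover have "\<not> (49/50 \<le> k \<and> k \<le> 1)" using iv9[of k] f0 by auto
  ultimately show ?thesis using assms(1) by argo
qed

lemma bnorm_scale:
  fixes c x y z :: real
  assumes "c \<noteq> 0"
  shows "bnormalize (c*x, c*y, c*z) = bnormalize (x, y, z)"
     and "bsum (c*x, c*y, c*z) = c * bsum (x,y,z)"
  using assms by (simp_all add: bnormalize_def bsum_def add.assoc[symmetric] distrib_left[symmetric])

theorem theorem3p4:
  fixes k :: real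
  assumes "k > 0"
    and "2*k^6 - 13*k^5 - 11*k^4 + 6*k^2 + k - 1 = 0"
  shows "same_point (X12 1 k k) (X15 1 k k)"
proof -
  have k1: "k > 1" using k_gt1 assms by blast
  define S where "S = conwayS 1 k k"
  define t where "t = sqrt (3::real)"
  have t2: "t^2 = 3" and tpos: "t > 0" unfolding t_def by auto
  have S_eq: "S = sqrt (4*k^2 - 1) / 2"
    unfolding S_def conwayS_def by (simp add: algebra_simps power2_eq_square)
  define s where "s = 2*S"
  have kk: "1 \<le> k*k" using k1 by (metis less_imp_le mult_le_cancel_left1 order_trans less_le_trans zero_less_one)
  have s2: "s^2 = 4*k^2 - 1" unfolding s_def S_eq using kk
    by (simp add: power2_eq_square)
  have spos: "s > 0" unfolding s_def S_eq using kk
    by (simp add: power2_eq_square)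
  define A where "A = 4*k^4-2*k^3-3*k^2+1"
  define B where "B = 4*k^5+2*k^4-2*k^3-5*k^2+1"
  have kp: "k^1 \<le> k^2" "k^2 \<le> k^3" "k^3 \<le> k^4" "k = k^1"
    using k1 power_increasing[of 1 2 k] power_increasing[of 2 3 k] power_increasing[of 3 4 k] by auto
  have A0: "A \<ge> 0"
  proof -
    have "A = (k-1)*(4*k^3+2*k^2-k-1)" unfolding A_def by algebra
    moreover have "4*k^3+2*k^2-k-1 \<ge> 0" using k1
      using kp by linarith
    ultimately show ?thesis using k1 by simp
  qed
  have B0: "B \<ge> 0"
  proof -
    have "B = (k-1)*(4*k^4+6*k^3+4*k^2-k-1)" unfolding B_def by algebra
    moreover have "4*k^4+6*k^3+4*k^2-k-1 \<ge> 0" using k1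
      using kp by linarith
    ultimately show ?thesis using k1 by simp
  qed
  have sq: "(s*A)^2 = (t*B)^2"
  proof -
    have "(s*A)^2 - (t*B)^2 = (4*k^2-1)*A^2 - 3*B^2"
      by (simp add: power_mult_distrib s2 t2)
    also have "\<dots> = (2*k^6 - 13*k^5 - 11*k^4 + 6*k^2 + k - 1) * (4+4*k-12*k^2-4*k^3+8*k^4)"
      unfolding A_def B_def by algebra
    also have "\<dots> = 0" using assms(2) by simp
    finally show ?thesis by simp
  qed
  have key: "s*A = t*B"
    using power2_eq_imp_eq[OF sq] A0 B0 spos tpos by simp
  have d: "2*k - 1 > 0" using k1 by simp
  define c where "c = k^2*(t/2+S)/(k+1)^2"
  have Spos: "S > 0" using spos s_def by simp
  have cpos: "c > 0" unfolding c_def using Spos tpos k1 by simp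
  have X12e: "X12 1 k k = (4*k^2/(2*k-1), (k+1)^2, (k+1)^2)"
    unfolding X12_def by (simp add: algebra_simps power2_eq_square)
  have c1: "t*(2*k^2-1)/2 + S = c * (4*k^2/(2*k-1))"
  proof -
    have eq: "(t*(2*k^2-1) + s)*((k+1)^2*(2*k-1)) = 4*k^4*(t+s)"
    proof -
      have "(t*(2*k^2-1) + s)*((k+1)^2*(2*k-1)) - 4*k^4*(t+s) = t*B - s*A"
        unfolding A_def B_def by algebra
      thus ?thesis using key by simp
    qed
    show ?thesis
    proof -
      have nz: "(k+1)^2 \<noteq> 0" "2*k-1 \<noteq> 0" using k1 by auto
      have "c * (4*k^2/(2*k-1)) = (k^2*(t+s)/2) * (4*k^2) / ((k+1)^2 * (2*k-1))"
        unfolding c_def s_def by (simp add: field_simps)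
      also have "\<dots> = (4*k^4*(t+s)) / (2*((k+1)^2 * (2*k-1)))"
        by (simp add: power4_eq_xxxx power2_eq_square algebra_simps)
      also have "\<dots> = ((t*(2*k^2-1) + s)*((k+1)^2*(2*k-1))) / (2*((k+1)^2 * (2*k-1)))"
        using eq by simp
      also have "\<dots> = (t*(2*k^2-1) + s)/2" using nz by simp
      finally show ?thesis unfolding s_def by simp
    qed
  qed
  have c2: "k^2*(t/2+S) = c*(k+1)^2" unfolding c_def using k1 by simp
  have X15e: "X15 1 k k = (c * (4*k^2/(2*k-1)), c*(k+1)^2, c*(k+1)^2)"
    unfolding X15_def S_def[symmetric] t_def[symmetric] using c1 c2
    by (simp add: algebra_simps)
  have p1: "4*k^2/(2*k-1) > 0" using d k1 by simp
  have p2: "(k+1)^2 > 0" using k1 by simp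
  have bse: "bsum (X12 1 k k) = 4*k^2/(2*k-1) + 2*(k+1)^2" by (simp add: X12e bsum_def)
  have bs: "bsum (X12 1 k k) > 0" using bse p1 p2 by linarith
  show ?thesis unfolding same_point_def X15e bnorm_scale(1)[OF cpos[THEN less_imp_neq, symmetric]]
      bnorm_scale(2)[OF cpos[THEN less_imp_neq, symmetric]]
    using bs cpos X12e by auto
qed

end
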